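(* Let $0<r_j<\infty$ and $0<s_j<\infty$ for $j=1,\dots,n$, let $\rho=\otimes_{j=1}^n\gamma(r_j)$ and $\sigma=\otimes_{j=1}^n\gamma(s_j)$. Let $\alpha>1$ and let $V_{\sigma(\alpha-1)}$ and $V_{\rho(\alpha)}$ denote the covariance matrices of the gaussian states $\sigma^{\alpha-1}/\operatorname{tr}\sigma^{\alpha-1}$ and $\rho^\alpha/\operatorname{tr}\rho^\alpha$ respectively. Then $D_\alpha(\rho\|\sigma)<\infty\iff V_{\sigma(\alpha-1)}>V_{\rho(\alpha)}$.
   Context: One-mode Fock space: $\ell^2(\mathbb{Z}_{\ge 0})$ with orthonormal particle basis $\{|k\rangle\}$; $n$-mode space is the $n$-fold tensor product. For $0<s<\infty$, $\gamma(s)=(1-e^{-s})\sum_{k\ge0}e^{-ks}|k\rangle\langle k|$. For $\beta>0$, $\gamma(\mathbf{s})^\beta/\operatorname{tr}\gamma(\mathbf{s})^\beta=\otimes_j\gamma(\beta s_j)$, and the covariance matrix of $\otimes_j\gamma(t_j)$ is $\frac12\operatorname{diag}(\coth\frac{t_1}{2},\dots,\coth\frac{t_n}{2})\otimes I_2$. $A>B$ means $A-B$ is positive definite. For states $\rho=\sum_i p_i|x_i\rangle\langle x_i|$, $\sigma=\sum_j q_j|y_j\rangle\langle y_j|$ (spectral decompositions), $D_\alpha(\rho\|\sigma)=\frac{1}{\alpha-1}\log\sum_{i,j}p_i^\alpha q_j^{1-\alpha}|\langle x_i|y_j\rangle|^2$. *)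

theory Defs
  imports "HOL-Analysis.Analysis"
begin

definition coth :: "real \<Rightarrow> real" where
  "coth x = cosh x / sinh x"

text \<open>Particle-number basis of the n-mode Fock space: multi-indices
  k = (k_0,...,k_{n-1}) in Z_{>=0}^n, encoded as functions nat => nat vanishing
  outside {..<n}.\<close>
definition fock_basis :: "nat \<Rightarrow> (nat \<Rightarrow> nat) set" where
  "fock_basis n = {k. \<forall>j. n \<le> j \<longrightarrow> k j = 0}"

text \<open>Squared overlap |<k|l>|^2 of two particle-basis vectors (orthonormal basis).\<close>
definition fock_overlap :: "(nat \<Rightarrow> nat) \<Rightarrow> (nat \<Rightarrow> nat) \<Rightarrow> real" where
  "fock_overlap k l = (if k = l then 1 else 0)"

text \<open>Eigenvalue of the product thermal state (x)_j gamma(s_j) on the basis vector |k>: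
  gamma(s) = (1 - e^{-s}) sum_k e^{-k s} |k><k|.\<close>
definition thermal_eig :: "nat \<Rightarrow> (nat \<Rightarrow> real) \<Rightarrow> (nat \<Rightarrow> nat) \<Rightarrow> real" where
  "thermal_eig n s k = (\<Prod>j<n. (1 - exp (- s j)) * exp (- real (k j) * s j))"

text \<open>Petz Renyi divergence from spectral decompositions
  rho = sum_{i in I} p i |x_i><x_i|, sigma = sum_{j in J} q j |y_j><y_j|,
  where ov i j = |<x_i|y_j>|^2:
  D_alpha = 1/(alpha-1) log sum_{i,j} p_i^alpha q_j^(1-alpha) |<x_i|y_j>|^2,
  valued in the extended reals (= +infinity when the nonnegative series diverges).\<close>
definition renyi_div ::
  "real \<Rightarrow> 'i set \<Rightarrow> ('i \<Rightarrow> real) \<Rightarrow> 'j set \<Rightarrow> ('j \<Rightarrow> real) \<Rightarrow> ('i \<Rightarrow> 'j \<Rightarrow> real) \<Rightarrow> ereal"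
where
  "renyi_div \<alpha> I p J q ov =
     (let S = (\<integral>\<^sup>+ ij. ennreal (p (fst ij) powr \<alpha> * q (snd ij) powr (1 - \<alpha>) * ov (fst ij) (snd ij))
                 \<partial>count_space (I \<times> J))
      in if S = \<infinity> then \<infinity> else ereal (ln (enn2real S) / (\<alpha> - 1)))"

text \<open>Renyi divergence of two n-mode product thermal states rho = (x)_j gamma(r_j),
  sigma = (x)_j gamma(s_j), both spectrally decomposed in the particle basis.\<close>
definition thermal_renyi :: "real \<Rightarrow> nat \<Rightarrow> (nat \<Rightarrow> real) \<Rightarrow> (nat \<Rightarrow> real) \<Rightarrow> ereal" where
  "thermal_renyi \<alpha> n r s =
     renyi_div \<alpha> (fock_basis n) (thermal_eig n r) (fock_basis n) (thermal_eig n s) fock_overlap"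

text \<open>Covariance matrix of (x)_j gamma(t_j): (1/2) diag(coth(t_1/2),...,coth(t_n/2)) (x) I_2,
  a 2n x 2n real matrix, indices 0..2n-1, row/column (j,a) <-> 2j+a.\<close>
definition thermal_cov :: "(nat \<Rightarrow> real) \<Rightarrow> nat \<Rightarrow> nat \<Rightarrow> real" where
  "thermal_cov t a b = (if a = b then coth (t (a div 2) / 2) / 2 else 0)"

definition pos_def :: "nat \<Rightarrow> (nat \<Rightarrow> nat \<Rightarrow> real) \<Rightarrow> bool" where
  "pos_def m M \<longleftrightarrow> (\<forall>x :: nat \<Rightarrow> real. (\<exists>i<m. x i \<noteq> 0) \<longrightarrow>
      (\<Sum>i<m. \<Sum>j<m. x i * M i j * x j) > 0)"

definition mat_gt :: "nat \<Rightarrow> (nat \<Rightarrow> nat \<Rightarrow> real) \<Rightarrow> (nat \<Rightarrow> nat \<Rightarrow> real) \<Rightarrow> bool" where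
  "mat_gt m A B \<longleftrightarrow> pos_def m (\<lambda>i j. A i j - B i j)"

end

theory Submission
  imports Defs
begin


lemma countable_fock: "countable (fock_basis n)"
proof -
  have "fock_basis n \<subseteq> range (\<lambda>xs::nat list. \<lambda>j. if j < length xs then xs ! j else 0)"
  proof
    fix k assume "k \<in> fock_basis n"
    hence "k = (\<lambda>j. if j < length (map k [0..<n]) then map k [0..<n] ! j else 0)"
      by (auto simp: fock_basis_def fun_eq_iff not_less)
    thus "k \<in> range (\<lambda>xs::nat list. \<lambda>j. if j < length xs then xs ! j else 0)" by blast
  qed
  thus ?thesis by (rule countable_subset) simp
qed

lemma tonelli_nat:
  assumes "countable A"
  shows "(\<integral>\<^sup>+x. f x \<partial>count_space (A \<times> (UNIV::nat set))) =
         (\<integral>\<^sup>+a. \<integral>\<^sup>+m. f (a,m) \<partial>count_space UNIV \<partial>count_space A)"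
proof -
  have "count_space (A \<times> (UNIV::nat set)) = count_space A \<Otimes>\<^sub>M count_space UNIV"
    using assms by (simp add: pair_measure_countable)
  moreover have "sigma_finite_measure (count_space (UNIV::nat set))"
    by (rule sigma_finite_measure_count_space_countable) simp
  moreover have "f \<in> borel_measurable (count_space A \<Otimes>\<^sub>M count_space (UNIV::nat set))"
    by (simp add: calculation(1)[symmetric])
  ultimately show ?thesis
    by (simp add: sigma_finite_measure.nn_integral_fst)
qed

lemma bij_fock: "bij_betw (\<lambda>(k,m). k(n:=m)) (fock_basis n \<times> UNIV) (fock_basis (Suc n))"
proof (rule bij_betwI[where g = "\<lambda>k. (k(n:=0), k n)"])
  show "(\<lambda>(k,m). k(n:=m)) \<in> fock_basis n \<times> UNIV \<rightarrow> fock_basis (Suc n)"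
    by (auto simp: fock_basis_def)
  show "(\<lambda>k. (k(n:=0), k n)) \<in> fock_basis (Suc n) \<rightarrow> fock_basis n \<times> UNIV"
    unfolding fock_basis_def by (auto simp: Suc_le_eq)
  show "\<And>x. x \<in> fock_basis n \<times> UNIV \<Longrightarrow> (\<lambda>k. (k(n:=0), k n)) ((\<lambda>(k,m). k(n:=m)) x) = x"
    by (clarsimp simp: fock_basis_def fun_eq_iff)
  show "\<And>y. y \<in> fock_basis (Suc n) \<Longrightarrow> (case (y(n := 0), y n) of (k, m) \<Rightarrow> k(n := m)) = y"
    by (auto simp: fock_basis_def fun_eq_iff)
qed

lemma fock_prod:
  fixes G :: "nat \<Rightarrow> nat \<Rightarrow> ennreal"
  shows "(\<integral>\<^sup>+k. (\<Prod>j<n. G j (k j)) \<partial>count_space (fock_basis n)) =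
         (\<Prod>j<n. \<integral>\<^sup>+m. G j m \<partial>count_space UNIV)"
proof (induction n)
  case 0
  have "fock_basis 0 = {\<lambda>_. 0}" by (auto simp: fock_basis_def)
  then show ?case by (simp add: nn_integral_count_space_finite)
next
  case (Suc n)
  have "(\<integral>\<^sup>+k. (\<Prod>j<Suc n. G j (k j)) \<partial>count_space (fock_basis (Suc n))) =
        (\<integral>\<^sup>+x. (\<lambda>k. \<Prod>j<Suc n. G j (k j)) ((\<lambda>(k,m). k(n:=m)) x) \<partial>count_space (fock_basis n \<times> UNIV))"
    by (rule nn_integral_bij_count_space[OF bij_fock, symmetric])
  also have "\<dots> = (\<integral>\<^sup>+x. (\<Prod>j<n. G j (fst x j)) * G n (snd x) \<partial>count_space (fock_basis n \<times> UNIV))"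
  proof -
    have *: "(\<Prod>j<Suc n. G j ((k(n:=m)) j)) = (\<Prod>j<n. G j (k j)) * G n m" for k m
    proof -
      have "(\<Prod>j<n. G j ((k(n:=m)) j)) = (\<Prod>j<n. G j (k j))"
        by (intro prod.cong) auto
      then show ?thesis
        by (simp add: lessThan_Suc mult.commute)
    qed
    show ?thesis by (intro nn_integral_cong) (auto simp: *)
  qed
  also have "\<dots> = (\<integral>\<^sup>+a. \<integral>\<^sup>+m. (\<Prod>j<n. G j (a j)) * G n m \<partial>count_space UNIV \<partial>count_space (fock_basis n))"
    by (subst tonelli_nat[OF countable_fock]) (simp add: mult.commute)
  also have "\<dots> = (\<integral>\<^sup>+a. (\<Prod>j<n. G j (a j)) * (\<integral>\<^sup>+m. G n m \<partial>count_space UNIV) \<partial>count_space (fock_basis n))"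
    by (simp add: nn_integral_cmult)
  also have "\<dots> = (\<integral>\<^sup>+a. (\<Prod>j<n. G j (a j)) \<partial>count_space (fock_basis n)) * (\<integral>\<^sup>+m. G n m \<partial>count_space UNIV)"
    by (simp add: nn_integral_multc)
  finally show ?case by (simp add: Suc lessThan_Suc mult.commute)
qed

lemma diag_reduce:
  fixes h :: "(nat \<Rightarrow> nat) \<times> (nat \<Rightarrow> nat) \<Rightarrow> real"
  shows "(\<integral>\<^sup>+ij. ennreal (h ij * fock_overlap (fst ij) (snd ij)) \<partial>count_space (F \<times> F)) =
         (\<integral>\<^sup>+k. ennreal (h (k,k)) \<partial>count_space F)"
proof -
  let ?D = "(\<lambda>k. (k,k)) ` F"
  have bij: "bij_betw (\<lambda>k. (k,k)) F ?D"
    by (rule bij_betw_imageI) (auto simp: inj_on_def)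
  have "(\<integral>\<^sup>+ij. ennreal (h ij * fock_overlap (fst ij) (snd ij)) \<partial>count_space (F \<times> F)) =
        (\<integral>\<^sup>+ij. ennreal (h ij * fock_overlap (fst ij) (snd ij)) * indicator (F \<times> F) ij \<partial>count_space UNIV)"
    by (rule nn_integral_count_space_indicator) simp
  also have "\<dots> = (\<integral>\<^sup>+ij. ennreal (h ij) * indicator ?D ij \<partial>count_space UNIV)"
    by (intro nn_integral_cong) (auto simp: fock_overlap_def indicator_def)
  also have "\<dots> = (\<integral>\<^sup>+ij. ennreal (h ij) \<partial>count_space ?D)"
    by (rule nn_integral_count_space_indicator[symmetric]) simp
  also have "\<dots> = (\<integral>\<^sup>+k. ennreal (h (k,k)) \<partial>count_space F)"
    by (rule nn_integral_bij_count_space[OF bij, symmetric])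
  finally show ?thesis .
qed

lemma geo_int:
  fixes a t :: real
  assumes "0 < a"
  shows "(\<integral>\<^sup>+m. ennreal (a * exp (- real m * t)) \<partial>count_space UNIV) \<noteq> 0"
    and "(\<integral>\<^sup>+m. ennreal (a * exp (- real m * t)) \<partial>count_space UNIV) = \<infinity> \<longleftrightarrow> t \<le> 0"
proof -
  show "(\<integral>\<^sup>+m. ennreal (a * exp (- real m * t)) \<partial>count_space UNIV) \<noteq> 0"
    using assms by (simp add: nn_integral_0_iff_AE AE_count_space)
  show "(\<integral>\<^sup>+m. ennreal (a * exp (- real m * t)) \<partial>count_space UNIV) = \<infinity> \<longleftrightarrow> t \<le> 0"
  proof
    assume "(\<integral>\<^sup>+m. ennreal (a * exp (- real m * t)) \<partial>count_space UNIV) = \<infinity>"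
    show "t \<le> 0"
    proof (rule ccontr)
      assume "\<not> t \<le> 0"
      hence t: "0 < t" by simp
      have eq: "(\<lambda>m. a * exp (- real m * t)) = (\<lambda>m. a * exp (- t) ^ m)"
        by (rule ext) (metis exp_of_nat_mult mult.commute mult_minus_left mult_minus_right)
      have "summable (\<lambda>m. a * exp (- t) ^ m)"
        using t by (intro summable_mult summable_geometric) simp
      hence sm: "summable (\<lambda>m. a * exp (- real m * t))" by (simp only: eq)
      have "(\<integral>\<^sup>+m. ennreal (a * exp (- real m * t)) \<partial>count_space UNIV) = (\<Sum>m. ennreal (a * exp (- real m * t)))"
        by (rule nn_integral_count_space_nat)
      also have "\<dots> = ennreal (\<Sum>m. a * exp (- real m * t))"
        using assms sm by (intro suminf_ennreal2) auto
      finally show False using \<open>_ = \<infinity>\<close> by simp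
    qed
  next
    assume t: "t \<le> 0"
    have "(\<integral>\<^sup>+m. ennreal a \<partial>count_space (UNIV::nat set)) \<le> (\<integral>\<^sup>+m. ennreal (a * exp (- real m * t)) \<partial>count_space UNIV)"
    proof (intro nn_integral_mono ennreal_leI)
      fix m :: nat
      have "1 \<le> exp (- real m * t)" using t by (simp add: mult_nonneg_nonpos)
      thus "a \<le> a * exp (- real m * t)" using assms by simp
    qed
    moreover have "(\<integral>\<^sup>+m. ennreal a \<partial>count_space (UNIV::nat set)) = \<infinity>"
      using assms by (simp add: ennreal_mult_top)
    ultimately show "(\<integral>\<^sup>+m. ennreal (a * exp (- real m * t)) \<partial>count_space UNIV) = \<infinity>"
      by (simp add: top_unique)
  qed
qed



lemma coth_less:
  assumes "0 < a" "a < b"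
  shows "coth b < coth a"
proof -
  have "0 < sinh (b - a)" using assms by simp
  hence c: "cosh b * sinh a < cosh a * sinh b" by (simp add: sinh_diff algebra_simps)
  have p: "0 < sinh a" "0 < sinh b" using assms by auto
  have "cosh b / sinh b = (cosh b * sinh a) / (sinh a * sinh b)" using p by simp
  also have "\<dots> < (cosh a * sinh b) / (sinh a * sinh b)"
    using c p by (intro divide_strict_right_mono) auto
  also have "\<dots> = cosh a / sinh a" using p by simp
  finally show ?thesis unfolding coth_def .
qed

lemma coth_less_iff:
  assumes "0 < a" "0 < b"
  shows "coth b < coth a \<longleftrightarrow> a < b"
  using coth_less[of a b] coth_less[of b a] assms
  by (metis less_asym linorder_neqE_linordered_idom)

lemma pos_def_diag:
  "pos_def m (\<lambda>i j. if i = j then D i else 0) \<longleftrightarrow> (\<forall>i<m. 0 < D i)"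
proof -
  have q: "(\<Sum>i<m. \<Sum>j<m. x i * (if i = j then D i else 0) * x j) = (\<Sum>i<m. D i * (x i)\<^sup>2)" for x
  proof (rule sum.cong[OF refl])
    fix i assume "i \<in> {..<m}"
    have "(\<Sum>j<m. x i * (if i = j then D i else 0) * x j) = (\<Sum>j<m. if i = j then x i * D i * x i else 0)"
      by (intro sum.cong) auto
    also have "\<dots> = D i * (x i)\<^sup>2" using \<open>i \<in> _\<close> by (simp add: power2_eq_square)
    finally show "(\<Sum>j<m. x i * (if i = j then D i else 0) * x j) = D i * (x i)\<^sup>2" .
  qed
  have pd: "pos_def m (\<lambda>i j. if i = j then D i else 0) \<longleftrightarrow>
     (\<forall>x :: nat \<Rightarrow> real. (\<exists>i<m. x i \<noteq> 0) \<longrightarrow> 0 < (\<Sum>i<m. D i * (x i)\<^sup>2))"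
    unfolding pos_def_def q ..
  show ?thesis
  proof
    assume h: "pos_def m (\<lambda>i j. if i = j then D i else 0)"
    show "\<forall>i<m. 0 < D i"
    proof (intro allI impI)
      fix i assume "i < m"
      let ?x = "\<lambda>j. if j = i then 1 else 0::real"
      have ex: "\<exists>k<m. ?x k \<noteq> 0" using \<open>i < m\<close> by auto
      have hall: "\<forall>x :: nat \<Rightarrow> real. (\<exists>i<m. x i \<noteq> 0) \<longrightarrow> 0 < (\<Sum>i<m. D i * (x i)\<^sup>2)"
        using h pd by blast
      have "0 < (\<Sum>k<m. D k * (?x k)\<^sup>2)" using spec[OF hall, of ?x] ex by (rule mp)
      also have "\<dots> = (\<Sum>k<m. if k = i then D i else 0)"
        by (intro sum.cong) auto
      also have "\<dots> = D i" using \<open>i < m\<close> by simp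
      finally show "0 < D i" .
    qed
  next
    assume h: "\<forall>i<m. 0 < D i"
    show "pos_def m (\<lambda>i j. if i = j then D i else 0)"
      unfolding pd
    proof (intro allI impI)
      fix x :: "nat \<Rightarrow> real" assume "\<exists>i<m. x i \<noteq> 0"
      then obtain i where i: "i < m" "x i \<noteq> 0" by blast
      have nn: "\<forall>k\<in>{..<m}. 0 \<le> D k * (x k)\<^sup>2"
      proof
        fix k assume "k \<in> {..<m}"
        hence "0 < D k" using h by simp
        thus "0 \<le> D k * (x k)\<^sup>2" by simp
      qed
      have "0 < D i * (x i)\<^sup>2" using h i by simp
      then show "0 < (\<Sum>i<m. D i * (x i)\<^sup>2)"
        using nn i by (intro sum_pos2[of _ i]) auto
    qed
  qed
qed


lemma eig_point:
  fixes c d x y al :: real and k :: nat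
  shows "(c * exp (- real k * x)) powr al * (d * exp (- real k * y)) powr (1 - al) =
         (c powr al * d powr (1 - al)) * exp (- real k * (al * x - (al - 1) * y))"
proof -
  have "(c * exp (- real k * x)) powr al * (d * exp (- real k * y)) powr (1 - al) =
        (c powr al * d powr (1 - al)) * (exp (- real k * x * al) * exp (- real k * y * (1 - al)))"
    by (simp add: powr_mult exp_powr_real)
  also have "exp (- real k * x * al) * exp (- real k * y * (1 - al)) = exp (- real k * (al * x - (al - 1) * y))"
    by (simp add: exp_add[symmetric] algebra_simps)
  finally show ?thesis .
qed

theorem proposition3p6:
  fixes n :: nat and r s :: "nat \<Rightarrow> real" and \<alpha> :: real
  assumes "\<And>j. j < n \<Longrightarrow> 0 < r j"
      and "\<And>j. j < n \<Longrightarrow> 0 < s j"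
      and "1 < \<alpha>"
  shows "thermal_renyi \<alpha> n r s < \<infinity> \<longleftrightarrow>
         mat_gt (2 * n) (thermal_cov (\<lambda>j. (\<alpha> - 1) * s j)) (thermal_cov (\<lambda>j. \<alpha> * r j))"
proof -
  define a where "a j = (1 - exp (- r j)) powr \<alpha> * (1 - exp (- s j)) powr (1 - \<alpha>)" for j
  define t where "t j = \<alpha> * r j - (\<alpha> - 1) * s j" for j
  define F where "F = fock_basis n"
  define S where "S = (\<integral>\<^sup>+ ij. ennreal (thermal_eig n r (fst ij) powr \<alpha> * thermal_eig n s (snd ij) powr (1 - \<alpha>) * fock_overlap (fst ij) (snd ij))
                 \<partial>count_space (F \<times> F))"
  have eig: "thermal_eig n r k powr \<alpha> * thermal_eig n s k powr (1 - \<alpha>) = (\<Prod>j<n. a j * exp (- real (k j) * t j))" for k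
  proof -
    have "thermal_eig n r k powr \<alpha> * thermal_eig n s k powr (1 - \<alpha>) =
      (\<Prod>j<n. ((1 - exp (- r j)) * exp (- real (k j) * r j)) powr \<alpha> * ((1 - exp (- s j)) * exp (- real (k j) * s j)) powr (1 - \<alpha>))"
      unfolding thermal_eig_def prod_powr_distrib prod.distrib[symmetric] by (rule refl)
    also have "\<dots> = (\<Prod>j<n. a j * exp (- real (k j) * t j))"
      unfolding a_def t_def by (intro prod.cong refl eig_point)
    finally show ?thesis .
  qed
  have a_nn: "0 \<le> a j" for j unfolding a_def by simp
  have a_pos: "0 < a j" if "j < n" for j
  proof -
    have "exp (- r j) < 1" "exp (- s j) < 1" using assms(1,2)[OF that] by auto
    thus ?thesis unfolding a_def by simp
  qed
  have "S = (\<integral>\<^sup>+k. ennreal (thermal_eig n r k powr \<alpha> * thermal_eig n s k powr (1 - \<alpha>)) \<partial>count_space F)"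
    unfolding S_def
    by (rule diag_reduce[where h = "\<lambda>ij. thermal_eig n r (fst ij) powr \<alpha> * thermal_eig n s (snd ij) powr (1 - \<alpha>)", simplified])
  also have "\<dots> = (\<integral>\<^sup>+k. (\<Prod>j<n. ennreal (a j * exp (- real (k j) * t j))) \<partial>count_space F)"
    unfolding eig using a_nn by (intro nn_integral_cong prod_ennreal[symmetric]) simp
  also have "\<dots> = (\<Prod>j<n. \<integral>\<^sup>+m. ennreal (a j * exp (- real m * t j)) \<partial>count_space UNIV)"
    unfolding F_def by (rule fock_prod)
  finally have Seq: "S = (\<Prod>j<n. \<integral>\<^sup>+m. ennreal (a j * exp (- real m * t j)) \<partial>count_space UNIV)" .
  define I where "I j = (\<integral>\<^sup>+m. ennreal (a j * exp (- real m * t j)) \<partial>count_space UNIV)" for j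
  have "S = (\<Prod>j<n. I j)" unfolding Seq I_def ..
  also have "\<dots> = top \<longleftrightarrow> (\<forall>j\<in>{..<n}. I j \<noteq> 0) \<and> (\<exists>j\<in>{..<n}. I j = top)"
    by (simp add: ennreal_prod_eq_top)
  finally have "S = top \<longleftrightarrow> (\<forall>j\<in>{..<n}. I j \<noteq> 0) \<and> (\<exists>j\<in>{..<n}. I j = top)" .
  moreover have "I j \<noteq> 0" if "j < n" for j unfolding I_def by (rule geo_int(1)[OF a_pos[OF that]])
  moreover have "I j = top \<longleftrightarrow> t j \<le> 0" if "j < n" for j unfolding I_def
    using geo_int(2)[OF a_pos[OF that]] by simp
  ultimately have Stop: "S = \<infinity> \<longleftrightarrow> (\<exists>j<n. t j \<le> 0)" by auto
  have lhs: "thermal_renyi \<alpha> n r s < \<infinity> \<longleftrightarrow> S \<noteq> \<infinity>"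
    unfolding thermal_renyi_def renyi_div_def Let_def F_def[symmetric] S_def[symmetric] by simp
  define E where "E j = coth ((\<alpha> - 1) * s j / 2) / 2 - coth (\<alpha> * r j / 2) / 2" for j
  have "(\<lambda>i j. thermal_cov (\<lambda>j. (\<alpha> - 1) * s j) i j - thermal_cov (\<lambda>j. \<alpha> * r j) i j) =
        (\<lambda>i j. if i = j then E (i div 2) else 0)"
    by (intro ext) (simp add: thermal_cov_def E_def)
  hence "mat_gt (2 * n) (thermal_cov (\<lambda>j. (\<alpha> - 1) * s j)) (thermal_cov (\<lambda>j. \<alpha> * r j)) \<longleftrightarrow>
         (\<forall>i<2 * n. 0 < E (i div 2))"
    unfolding mat_gt_def by (simp add: pos_def_diag)
  also have "\<dots> \<longleftrightarrow> (\<forall>j<n. 0 < E j)"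
  proof
    assume h: "\<forall>i<2 * n. 0 < E (i div 2)"
    show "\<forall>j<n. 0 < E j"
    proof (intro allI impI)
      fix j assume "j < n"
      hence "2 * j < 2 * n" by simp
      hence "0 < E (2 * j div 2)" using h by blast
      thus "0 < E j" by simp
    qed
  next
    assume "\<forall>j<n. 0 < E j"
    moreover have "i div 2 < n" if "i < 2 * n" for i using that by linarith
    ultimately show "\<forall>i<2 * n. 0 < E (i div 2)" by blast
  qed
  also have "\<dots> \<longleftrightarrow> (\<forall>j<n. 0 < t j)"
  proof -
    have "0 < E j \<longleftrightarrow> 0 < t j" if "j < n" for j
    proof -
      have p1: "0 < (\<alpha> - 1) * s j / 2" using assms(2)[OF that] assms(3) by simp
      have p2: "0 < \<alpha> * r j / 2" using assms(1)[OF that] assms(3) by simp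
      have "0 < E j \<longleftrightarrow> coth (\<alpha> * r j / 2) < coth ((\<alpha> - 1) * s j / 2)"
        unfolding E_def by linarith
      also have "\<dots> \<longleftrightarrow> (\<alpha> - 1) * s j / 2 < \<alpha> * r j / 2"
        by (rule coth_less_iff[OF p1 p2])
      also have "\<dots> \<longleftrightarrow> 0 < t j" unfolding t_def by linarith
      finally show ?thesis .
    qed
    thus ?thesis by auto
  qed
  finally have M: "mat_gt (2 * n) (thermal_cov (\<lambda>j. (\<alpha> - 1) * s j)) (thermal_cov (\<lambda>j. \<alpha> * r j)) \<longleftrightarrow> (\<forall>j<n. 0 < t j)" .
  show ?thesis using lhs Stop M not_le by blast
qed


end
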